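(* Let $G$ be a $d$-regular graph with $n$ vertices such that $2k$ divides $dn$, where $k\ge3$ is an odd integer. Then $G$ has a $k$-star decomposition if and only if $G$ has an orientation $D$ such that $d^+_D(v)-d^-_D(v)\equiv d \pmod k$ for every $v\in V(G)$.
   Context: A $k$-star decomposition of $G$ is a partition of $E(G)$ into edge-disjoint copies of $K_{1,k}$. For an orientation $D$ of $G$, $d^+_D(v)$ and $d^-_D(v)$ denote the out-degree and in-degree of $v$. *)

theory Defs
  imports Main "HOL-Library.Disjoint_Sets"
begin

definition simple_graph :: "'a set \<Rightarrow> 'a set set \<Rightarrow> bool" where
  "simple_graph V E \<longleftrightarrow> finite V \<and> (\<forall>e\<in>E. e \<subseteq> V \<and> card e = 2)"

definition degree :: "'a set set \<Rightarrow> 'a \<Rightarrow> nat" where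
  "degree E v = card {e\<in>E. v \<in> e}"

definition regular :: "'a set \<Rightarrow> 'a set set \<Rightarrow> nat \<Rightarrow> bool" where
  "regular V E d \<longleftrightarrow> (\<forall>v\<in>V. degree E v = d)"

(* S is (the edge set of) a copy of K_{1,k} in a simple graph: k edges sharing a centre
   (in a simple graph, distinct edges through the centre have distinct other ends). *)
definition is_star :: "nat \<Rightarrow> 'a set set \<Rightarrow> bool" where
  "is_star k S \<longleftrightarrow> card S = k \<and> (\<exists>c. \<forall>e\<in>S. c \<in> e)"

definition star_decomposition :: "nat \<Rightarrow> 'a set set \<Rightarrow> 'a set set set \<Rightarrow> bool" where
  "star_decomposition k E P \<longleftrightarrow> partition_on E P \<and> (\<forall>S\<in>P. is_star k S)"

definition has_star_decomposition :: "nat \<Rightarrow> 'a set set \<Rightarrow> bool" where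
  "has_star_decomposition k E \<longleftrightarrow> (\<exists>P. star_decomposition k E P)"

definition orientation :: "'a set set \<Rightarrow> ('a \<times> 'a) set \<Rightarrow> bool" where
  "orientation E D \<longleftrightarrow>
     (\<forall>(u,v)\<in>D. {u,v} \<in> E) \<and>
     (\<forall>u v. {u,v} \<in> E \<longrightarrow> ((u,v) \<in> D \<longleftrightarrow> (v,u) \<notin> D))"

definition out_deg :: "('a \<times> 'a) set \<Rightarrow> 'a \<Rightarrow> nat" where
  "out_deg D v = card {w. (v,w) \<in> D}"

definition in_deg :: "('a \<times> 'a) set \<Rightarrow> 'a \<Rightarrow> nat" where
  "in_deg D v = card {w. (w,v) \<in> D}"

end

theory Submission
  imports Defs
begin

lemma split_k:
  assumes "finite A" "k > 0" "k dvd card A"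
  shows "\<exists>P. partition_on A P \<and> (\<forall>S\<in>P. card S = k)"
  using assms
proof (induction "card A" arbitrary: A rule: less_induct)
  case less
  show ?case
  proof (cases "A = {}")
    case True then show ?thesis by (auto simp: partition_on_empty)
  next
    case False
    then have "card A > 0" using less.prems by auto
    with less.prems have "k \<le> card A" by (simp add: dvd_imp_le)
    then obtain B where B: "B \<subseteq> A" "card B = k"
      by (meson obtain_subset_with_card_n)
    have fin: "finite (A - B)" using less.prems by auto
    have cAB: "card (A - B) = card A - k" using B less.prems
      by (simp add: card_Diff_subset finite_subset)
    have "card (A - B) < card A" using cAB less.prems \<open>card A > 0\<close> by simp
    moreover have "k dvd card (A - B)" using cAB less.prems by (simp add: dvd_diff_nat)
    ultimately obtain P where P: "partition_on (A - B) P" "\<forall>S\<in>P. card S = k"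
      using less.hyps[of "A - B"] fin less.prems by blast
    have dj: "disjnt B (\<Union>P)" using P(1) by (auto simp: partition_on_def disjnt_def)
    have "B \<noteq> {}" using B less.prems by auto
    then have "partition_on A (insert B P)"
      using partition_on_insert[OF dj] P B by auto
    then show ?thesis using P B by blast
  qed
qed

lemma no_loop:
  assumes "simple_graph V E" "{u,v} \<in> E" shows "u \<noteq> v"
  using assms by (auto simp: simple_graph_def)

lemma deg_sum:
  assumes sg: "simple_graph V E" and o: "orientation E D" and v: "v \<in> V"
  shows "out_deg D v + in_deg D v = degree E v"
proof -
  let ?O = "{w. (v,w) \<in> D}" and ?I = "{w. (w,v) \<in> D}"
  have oE: "(a,b) \<in> D \<Longrightarrow> {a,b} \<in> E" for a b using o by (auto simp: orientation_def)
  have sub: "e \<in> E \<Longrightarrow> e \<subseteq> V" for e using sg by (auto simp: simple_graph_def)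
  have finV: "finite V" using sg by (auto simp: simple_graph_def)
  have fO: "finite ?O" by (rule finite_subset[OF _ finV]) (use oE sub in blast)
  have fI: "finite ?I" by (rule finite_subset[OF _ finV]) (use oE sub in blast)
  have dis: "?O \<inter> ?I = {}"
  proof (safe)
    fix w assume a: "(v,w) \<in> D" "(w,v) \<in> D"
    then have "{v,w} \<in> E" using oE by blast
    then show "w \<in> {}" using o a unfolding orientation_def by blast
  qed
  have nl: "w \<in> ?O \<union> ?I \<Longrightarrow> w \<noteq> v" for w
    using oE no_loop[OF sg] by (metis (mono_tags, lifting) Un_iff insert_commute mem_Collect_eq)
  have inj: "inj_on (\<lambda>w. {v,w}) (?O \<union> ?I)"
  proof (rule inj_onI)
    fix a b assume "a \<in> ?O \<union> ?I" "b \<in> ?O \<union> ?I" "{v,a} = {v,b}"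
    then show "a = b" using nl by (metis doubleton_eq_iff)
  qed
  have img1: "(\<lambda>w. {v,w}) ` (?O \<union> ?I) \<subseteq> {e\<in>E. v \<in> e}"
  proof
    fix e assume "e \<in> (\<lambda>w. {v,w}) ` (?O \<union> ?I)"
    then obtain w where w: "e = {v,w}" "(v,w) \<in> D \<or> (w,v) \<in> D" by blast
    then show "e \<in> {e\<in>E. v \<in> e}" using oE[of v w] oE[of w v] by (auto simp: insert_commute)
  qed
  have img2: "{e\<in>E. v \<in> e} \<subseteq> (\<lambda>w. {v,w}) ` (?O \<union> ?I)"
  proof
    fix e assume "e \<in> {e\<in>E. v \<in> e}"
    then have e: "e \<in> E" "v \<in> e" by auto
    then have "card e = 2" using sg by (auto simp: simple_graph_def)
    then obtain a b where ab: "e = {a,b}" "a \<noteq> b" by (meson card_2_iff)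
    then obtain w where w: "e = {v,w}" using e by auto
    have "(v,w) \<in> D \<or> (w,v) \<in> D" using o e w unfolding orientation_def by blast
    then show "e \<in> (\<lambda>w. {v,w}) ` (?O \<union> ?I)" using w by auto
  qed
  have img: "(\<lambda>w. {v,w}) ` (?O \<union> ?I) = {e\<in>E. v \<in> e}" using img1 img2 by blast
  have "degree E v = card (?O \<union> ?I)"
    unfolding degree_def img[symmetric] using card_image[OF inj] by simp
  also have "\<dots> = card ?O + card ?I" using card_Un_disjoint[OF fO fI dis] .
  finally show ?thesis by (simp add: out_deg_def in_deg_def)
qed


lemma in_card:
  assumes sg: "simple_graph V E" and o: "orientation E D"
  shows "in_deg D v = card ((\<lambda>w. {w,v}) ` {w. (w,v) \<in> D})"
proof -
  have oE: "(a,b) \<in> D \<Longrightarrow> {a,b} \<in> E" for a b using o by (auto simp: orientation_def)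
  have "inj_on (\<lambda>w. {w,v}) {w. (w,v) \<in> D}"
  proof (rule inj_onI)
    fix a b assume "a \<in> {w. (w,v) \<in> D}" "b \<in> {w. (w,v) \<in> D}" "{a,v} = {b,v}"
    then show "a = b" using no_loop[OF sg oE] by (metis doubleton_eq_iff mem_Collect_eq)
  qed
  then show ?thesis by (simp add: card_image in_deg_def)
qed

lemma centre_unique:
  assumes sg: "simple_graph V E" and "S \<subseteq> E" "card S \<ge> 2"
    "\<forall>e\<in>S. c \<in> e" "\<forall>e\<in>S. c' \<in> e"
  shows "c = c'"
proof (rule ccontr)
  assume ne: "c \<noteq> c'"
  have "S \<subseteq> {{c,c'}}"
  proof
    fix e assume e: "e \<in> S"
    then have "card e = 2" "{c,c'} \<subseteq> e" using assms by (auto simp: simple_graph_def)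
    moreover have "finite e" using \<open>card e = 2\<close> by (intro card_ge_0_finite) simp
    moreover have "card {c,c'} = 2" using ne by simp
    ultimately have "e = {c,c'}" by (metis card_subset_eq)
    then show "e \<in> {{c,c'}}" by simp
  qed
  then have "card S \<le> 1" using card_mono[of "{{c,c'}}" S] by simp
  then show False using assms by simp
qed


lemma dir_back:
  assumes sg: "simple_graph V E" and o: "orientation E D" and k: "odd k"
    and reg: "regular V E d"
    and m: "\<forall>v\<in>V. (int (out_deg D v) - int (in_deg D v)) mod int k = int d mod int k"
  shows "has_star_decomposition k E"
proof -
  have oE: "(a,b) \<in> D \<Longrightarrow> {a,b} \<in> E" for a b using o by (auto simp: orientation_def)
  have sub: "e \<in> E \<Longrightarrow> e \<subseteq> V" for e using sg by (auto simp: simple_graph_def)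
  have finV: "finite V" using sg by (auto simp: simple_graph_def)
  define IE where "IE v = (\<lambda>w. {w,v}) ` {w. (w,v) \<in> D}" for v
  have kpos: "k > 0" using k by (cases k) auto
  have dv: "k dvd card (IE v)" if v: "v \<in> V" for v
  proof -
    have s: "out_deg D v + in_deg D v = d" using deg_sum[OF sg o v] reg v by (simp add: regular_def)
    have s2: "int (out_deg D v) = int d - int (in_deg D v)" using arg_cong[OF s, of int] by simp
    have "(int d - 2 * int (in_deg D v)) mod int k = int d mod int k"
    proof -
      have "int d - 2 * int (in_deg D v) = int (out_deg D v) - int (in_deg D v)" using s2 by simp
      then show ?thesis using m v by simp
    qed
    then have "int k dvd (int d - 2 * int (in_deg D v)) - int d" by (simp add: mod_eq_dvd_iff)
    then have "int k dvd int (2 * in_deg D v)" by simp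
    then have "k dvd 2 * in_deg D v" by (simp only: of_nat_dvd_iff)
    moreover have "coprime k 2" using k by simp
    ultimately have "k dvd in_deg D v" using coprime_dvd_mult_right_iff by blast
    then show ?thesis using in_card[OF sg o] by (simp add: IE_def)
  qed
  have finIE: "finite (IE v)" if "v \<in> V" for v
  proof -
    have "{w. (w,v) \<in> D} \<subseteq> V" using oE sub by blast
    then show ?thesis unfolding IE_def using finV finite_subset by blast
  qed
  have "\<forall>v\<in>V. \<exists>P. partition_on (IE v) P \<and> (\<forall>S\<in>P. card S = k)"
    using split_k finIE dv kpos by blast
  then obtain Pf where Pf: "\<And>v. v \<in> V \<Longrightarrow> partition_on (IE v) (Pf v) \<and> (\<forall>S\<in>Pf v. card S = k)"
    by metis
  define P where "P = (\<Union>v\<in>V. Pf v)"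
  have IEsub: "IE v \<subseteq> E" for v unfolding IE_def using oE by blast
  have Ecov: "E \<subseteq> (\<Union>v\<in>V. IE v)"
  proof
    fix e assume e: "e \<in> E"
    then have "card e = 2" using sg by (auto simp: simple_graph_def)
    then obtain a b where ab: "e = {a,b}" "a \<noteq> b" by (meson card_2_iff)
    have "(a,b) \<in> D \<or> (b,a) \<in> D" using o e ab unfolding orientation_def by blast
    then show "e \<in> (\<Union>v\<in>V. IE v)"
    proof
      assume "(a,b) \<in> D" then have "b \<in> V" "e \<in> IE b" using sub e ab unfolding IE_def by auto
      then show ?thesis by blast
    next
      assume "(b,a) \<in> D" then have "a \<in> V" "e \<in> IE a" using sub e ab unfolding IE_def by (auto simp: insert_commute)
      then show ?thesis by blast
    qed
  qed
  have IEdis: "IE u \<inter> IE v = {}" if "u \<noteq> v" for u v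
  proof (rule ccontr)
    assume "IE u \<inter> IE v \<noteq> {}"
    then obtain a b where ab: "(a,u) \<in> D" "(b,v) \<in> D" "{a,u} = {b,v}" unfolding IE_def by auto
    then have "a = v" "b = u" using that by (auto simp: doubleton_eq_iff)
    then have "(v,u) \<in> D" "(u,v) \<in> D" using ab by auto
    then show False using o oE unfolding orientation_def by blast
  qed
  have PfU: "\<Union>(Pf v) = IE v" if "v \<in> V" for v using Pf[OF that] by (simp add: partition_on_def)
  have Pfd: "disjoint (Pf v)" if "v \<in> V" for v using Pf[OF that] by (simp add: partition_on_def)
  have Pfe: "{} \<notin> Pf v" if "v \<in> V" for v using Pf[OF that] by (simp add: partition_on_def)
  have Pfc: "\<forall>S\<in>Pf v. card S = k" if "v \<in> V" for v using Pf[OF that] by simp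
  have UP: "\<Union>P = (\<Union>v\<in>V. IE v)"
  proof -
    have "\<Union>P = (\<Union>v\<in>V. \<Union>(Pf v))" unfolding P_def by blast
    also have "\<dots> = (\<Union>v\<in>V. IE v)" using PfU by simp
    finally show ?thesis .
  qed
  have "partition_on E P"
  proof (rule partition_onI)
    show "\<Union>P = E" unfolding UP using Ecov IEsub by blast
  next
    fix p q assume pq: "p \<in> P" "q \<in> P" "p \<noteq> q"
    then obtain u v where uv: "u \<in> V" "v \<in> V" "p \<in> Pf u" "q \<in> Pf v" unfolding P_def by blast
    show "disjnt p q"
    proof (cases "u = v")
      case True
      then show ?thesis using Pfd[OF uv(1)] uv(3,4) pq(3) unfolding pairwise_def by blast
    next
      case False
      have "p \<subseteq> IE u" "q \<subseteq> IE v" using PfU uv by blast+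
      then show ?thesis using IEdis[OF False] by (auto simp: disjnt_def)
    qed
  next
    show "{} \<notin> P" unfolding P_def using Pfe by blast
  qed
  moreover have "\<forall>S\<in>P. is_star k S"
  proof
    fix S assume "S \<in> P"
    then obtain v where v: "v \<in> V" "S \<in> Pf v" unfolding P_def by blast
    then have "card S = k" "S \<subseteq> IE v" using Pfc PfU by blast+
    moreover have "\<forall>e\<in>IE v. v \<in> e" unfolding IE_def by auto
    ultimately show "is_star k S" unfolding is_star_def by blast
  qed
  ultimately have "star_decomposition k E P" unfolding star_decomposition_def by blast
  then show ?thesis unfolding has_star_decomposition_def by blast
qed


lemma dir_fwd:
  assumes sg: "simple_graph V E" and k: "k \<ge> 3"
    and reg: "regular V E d"
    and hs: "has_star_decomposition k E"
  shows "\<exists>D. orientation E D \<and>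
       (\<forall>v\<in>V. (int (out_deg D v) - int (in_deg D v)) mod int k = int d mod int k)"
proof -
  obtain P where P: "partition_on E P" "\<forall>S\<in>P. is_star k S"
    using hs unfolding has_star_decomposition_def star_decomposition_def by blast
  define cen where "cen S = (SOME c. \<forall>e\<in>S. c \<in> e)" for S :: "'a set set"
  have PE: "S \<subseteq> E" if "S \<in> P" for S using partition_onD1[OF P(1)] that by blast
  have cen: "\<forall>e\<in>S. cen S \<in> e" if "S \<in> P" for S
  proof -
    have "is_star k S" using P(2) that by blast
    then have "\<exists>c. \<forall>e\<in>S. c \<in> e" unfolding is_star_def by blast
    then show ?thesis unfolding cen_def by (rule someI_ex)
  qed
  have cardS: "card S = k" if "S \<in> P" for S using P(2) that unfolding is_star_def by blast
  have uniqP: "S = S'" if "S \<in> P" "S' \<in> P" "e \<in> S" "e \<in> S'" for S S' e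
  proof (rule ccontr)
    assume "S \<noteq> S'"
    then have "S \<inter> S' = {}" using partition_onD2[OF P(1)] that(1,2) unfolding disjoint_def by blast
    then show False using that(3,4) by blast
  qed
  have finV: "finite V" using sg by (auto simp: simple_graph_def)
  have finE: "finite E"
  proof -
    have "E \<subseteq> Pow V" using sg by (auto simp: simple_graph_def)
    then show ?thesis using finV by (rule finite_subset[OF _ finite_Pow_iff[THEN iffD2]])
  qed
  have finP: "finite P" using finite_elements[OF finE P(1)] .
  define D where "D = {(u,v). \<exists>S\<in>P. {u,v} \<in> S \<and> cen S = v}"
  have Dchar: "(u,v) \<in> D \<longleftrightarrow> cen S = v" if "S \<in> P" "{u,v} \<in> S" for S u v
  proof
    assume "(u,v) \<in> D"
    then obtain S' where S': "S' \<in> P" "{u,v} \<in> S'" "cen S' = v" unfolding D_def by blast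
    have "S = S'" by (rule uniqP[OF that(1) S'(1) that(2) S'(2)])
    then show "cen S = v" using S'(3) by simp
  next
    assume "cen S = v" then show "(u,v) \<in> D" unfolding D_def using that by blast
  qed
  have o1: "{u,v} \<in> E" if "(u,v) \<in> D" for u v
  proof -
    from that have "\<exists>S\<in>P. {u,v} \<in> S \<and> cen S = v" unfolding D_def by simp
    then obtain S where "S \<in> P" "{u,v} \<in> S" by blast
    then show ?thesis using PE by blast
  qed
  have o2: "(u,v) \<in> D \<longleftrightarrow> (v,u) \<notin> D" if e: "{u,v} \<in> E" for u v
  proof -
    have "{u,v} \<in> \<Union>P" using partition_onD1[OF P(1)] e by simp
    then obtain S where S: "S \<in> P" "{u,v} \<in> S" by (rule UnionE)
    have S2: "{v,u} \<in> S" using S by (simp add: insert_commute)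
    have "cen S \<in> {u,v}" by (rule bspec[OF cen[OF S(1)] S(2)])
    moreover have "u \<noteq> v" using no_loop[OF sg e] .
    moreover note Dchar[OF S] Dchar[OF S(1) S2]
    ultimately show ?thesis by auto
  qed
  have "orientation E D"
    unfolding orientation_def
  proof (intro conjI)
    show "\<forall>(u,v)\<in>D. {u,v} \<in> E" using o1 by blast
    show "\<forall>u v. {u,v} \<in> E \<longrightarrow> ((u,v) \<in> D \<longleftrightarrow> (v,u) \<notin> D)"
      using o2 by blast
  qed
  moreover have "(int (out_deg D v) - int (in_deg D v)) mod int k = int d mod int k" if v: "v \<in> V" for v
  proof -
    let ?Q = "{S\<in>P. cen S = v}"
    have eq: "(\<lambda>w. {w,v}) ` {w. (w,v) \<in> D} = \<Union>?Q"
    proof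
      show "(\<lambda>w. {w,v}) ` {w. (w,v) \<in> D} \<subseteq> \<Union>?Q"
      proof
        fix x assume "x \<in> (\<lambda>w. {w,v}) ` {w. (w,v) \<in> D}"
        then obtain w where w: "x = {w,v}" "(w,v) \<in> D" by blast
        then have "\<exists>S\<in>P. {w,v} \<in> S \<and> cen S = v" unfolding D_def by simp
        then obtain S where "S \<in> P" "{w,v} \<in> S" "cen S = v" by blast
        then show "x \<in> \<Union>?Q" using w(1) by blast
      qed
    next
      show "\<Union>?Q \<subseteq> (\<lambda>w. {w,v}) ` {w. (w,v) \<in> D}"
      proof
        fix e assume "e \<in> \<Union>?Q"
        then obtain S where S: "S \<in> P" "cen S = v" "e \<in> S" by blast
        have "cen S \<in> e" by (rule bspec[OF cen[OF S(1)] S(3)])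
        then have ve: "v \<in> e" using S(2) by simp
        have "card e = 2" using S PE sg by (auto simp: simple_graph_def)
        then obtain a b where ab: "e = {a,b}" "a \<noteq> b" by (meson card_2_iff)
        then obtain w where w: "e = {w,v}" using ve by auto
        have "{w,v} \<in> S" using S(3) w by simp
        then have "\<exists>S\<in>P. {w,v} \<in> S \<and> cen S = v" using S(1,2) by blast
        then have "(w,v) \<in> D" unfolding D_def by simp
        then show "e \<in> (\<lambda>w. {w,v}) ` {w. (w,v) \<in> D}" using w by blast
      qed
    qed
    have "card (\<Union>?Q) = sum card ?Q"
    proof (rule card_Union_disjoint)
      show "pairwise disjnt ?Q" by (rule pairwise_subset[OF partition_onD2[OF P(1)]]) auto
      show "finite S" if "S \<in> ?Q" for S using cardS[of S] that k by (intro card_ge_0_finite) auto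
    qed
    also have "\<dots> = sum (\<lambda>_. k) ?Q" by (rule sum.cong) (auto simp: cardS)
    also have "\<dots> = k * card ?Q" by simp
    finally have ink: "in_deg D v = k * card ?Q" using in_card[OF sg \<open>orientation E D\<close>] eq by simp
    have s: "out_deg D v + in_deg D v = d"
      using deg_sum[OF sg \<open>orientation E D\<close> v] reg v by (simp add: regular_def)
    have "int (out_deg D v) - int (in_deg D v) = int d + (- 2 * int (card ?Q)) * int k"
      using arg_cong[OF s, of int] ink by (simp add: algebra_simps)
    then show ?thesis by (simp only: mod_mult_self1)
  qed
  ultimately show ?thesis by (intro exI[of _ D] conjI ballI)
qed


theorem lemma6:
  fixes V :: "'a set" and E :: "'a set set" and d n k :: nat
  assumes "simple_graph V E"
    and "regular V E d"
    and "card V = n"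
    and "odd k" and "k \<ge> 3"
    and "2 * k dvd d * n"
  shows "has_star_decomposition k E \<longleftrightarrow>
    (\<exists>D. orientation E D \<and>
       (\<forall>v\<in>V. (int (out_deg D v) - int (in_deg D v)) mod int k = int d mod int k))"
proof
  assume "has_star_decomposition k E"
  then show "\<exists>D. orientation E D \<and>
       (\<forall>v\<in>V. (int (out_deg D v) - int (in_deg D v)) mod int k = int d mod int k)"
    by (rule dir_fwd[OF assms(1) assms(5) assms(2)])
next
  assume "\<exists>D. orientation E D \<and>
       (\<forall>v\<in>V. (int (out_deg D v) - int (in_deg D v)) mod int k = int d mod int k)"
  then obtain D where D: "orientation E D"
    "\<forall>v\<in>V. (int (out_deg D v) - int (in_deg D v)) mod int k = int d mod int k" by blast
  show "has_star_decomposition k E" by (rule dir_back[OF assms(1) D(1) assms(4) assms(2) D(2)])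
qed

end
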